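(* Let $\Lambda\ge 1$ and let $\mathcal{H}_\Lambda$ be the real vector space of $\Lambda\times\Lambda$ Hermitian matrices $\phi=(\phi_{ab})_{a,b=1}^{\Lambda}$, equipped with its Lebesgue measure $d\phi$. Let $S:\mathcal{H}_\Lambda\to\mathbb{R}$ be a finite sum of traces, $S[\phi]=\sum_k g_k\,\mathrm{Tr}(\phi^k)$. For a scale parameter $N$, let $R=([r_N]_{ab;cd})_{a,b,c,d=1}^{\Lambda}$ be complex coefficients satisfying $[r_N]_{ab;cd}=[r_N]_{cd;ab}$ for all $a,b,c,d$, and set $\Delta S_N[\phi]=\frac12\sum_{a,b,c,d}\phi_{ab}[r_N]_{ab;cd}\phi_{cd}$. For a complex $\Lambda\times\Lambda$ matrix $J$ write $J\cdot\phi=\sum_{a,b}J_{ab}\phi_{ab}$ and define $$\mathcal{Z}_N[J]=e^{\mathcal{W}_N[J]}=\int_{\mathcal{H}_\Lambda}d\phi\;e^{-S[\phi]-\Delta S_N[\phi]+J\cdot\phi},$$ where the entries $J_{ab}$ are treated as independent complex variables. Assume that for every $J$ this integral, as well as the integrals obtained by inserting any polynomial in the entries of $\phi$ into the integrand, converge absolutely (so that derivatives $\partial/\partial J_{ab}$ may be taken under the integral sign). Then for every fixed pair of indices $a,c\in\{1,\dots,\Lambda\}$, $$\sum_{b,d,e}\frac{\partial}{\partial J_{de}}\Big([r_N]_{ab;de}\frac{\partial}{\partial J_{cb}}-[r_N]_{bc;de}\frac{\partial}{\partial J_{ba}}\Big)e^{\mathcal{W}_N[J]}-\sum_b\Big(J_{ab}\frac{\partial}{\partial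 J_{cb}}-J_{bc}\frac{\partial}{\partial J_{ba}}\Big)e^{\mathcal{W}_N[J]}=0 .$$
   Context: $\mathcal{Z}_N$ is the regularized partition function of a Hermitian matrix model with a (generally non-unitarily-invariant) quadratic regulator term $\Delta S_N$; $\mathcal{W}_N=\ln\mathcal{Z}_N$. In the identity there is summation over $b,d,e$ but not over $a$ and $c$. *)

theory Defs
  imports "HOL-Analysis.Analysis"
begin

text \<open>Matrices are represented as functions on indices; only indices below
  the size Lambda matter.  Indices run over 0..Lambda-1.\<close>

text \<open>Real linear coordinates on the space of Lambda x Lambda Hermitian matrices:
  diagonal entries phi_aa = x(a,a); for a < b: phi_ab = x(a,b) + i x(b,a)
  and phi_ba = conj phi_ab.  This is a linear isomorphism from R^(Lambda^2) onto H_Lambda.\<close>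
definition herm :: "(nat \<times> nat \<Rightarrow> real) \<Rightarrow> nat \<Rightarrow> nat \<Rightarrow> complex" where
  "herm x a b =
     (if a = b then complex_of_real (x (a, a))
      else if a < b then Complex (x (a, b)) (x (b, a))
      else Complex (x (b, a)) (- x (a, b)))"

text \<open>Lebesgue measure on H_Lambda, transported along the coordinates above
  (Lebesgue measure on R^(Lambda^2)).\<close>
definition herm_lebesgue :: "nat \<Rightarrow> (nat \<times> nat \<Rightarrow> real) measure" where
  "herm_lebesgue \<Lambda> = PiM ({..<\<Lambda>} \<times> {..<\<Lambda>}) (\<lambda>_. lborel)"

fun mpow :: "nat \<Rightarrow> (nat \<Rightarrow> nat \<Rightarrow> complex) \<Rightarrow> nat \<Rightarrow> nat \<Rightarrow> nat \<Rightarrow> complex" where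
  "mpow \<Lambda> A 0 = (\<lambda>i j. if i = j then 1 else 0)"
| "mpow \<Lambda> A (Suc k) = (\<lambda>i j. \<Sum>l<\<Lambda>. mpow \<Lambda> A k i l * A l j)"

definition mtrace :: "nat \<Rightarrow> (nat \<Rightarrow> nat \<Rightarrow> complex) \<Rightarrow> complex" where
  "mtrace \<Lambda> A = (\<Sum>i<\<Lambda>. A i i)"

definition trace_action :: "nat \<Rightarrow> (nat \<Rightarrow> real) \<Rightarrow> nat \<Rightarrow> (nat \<Rightarrow> nat \<Rightarrow> complex) \<Rightarrow> complex" where
  "trace_action \<Lambda> g K \<phi> = (\<Sum>k\<le>K. complex_of_real (g k) * mtrace \<Lambda> (mpow \<Lambda> \<phi> k))"

definition regulator :: "nat \<Rightarrow> (nat \<Rightarrow> nat \<Rightarrow> nat \<Rightarrow> nat \<Rightarrow> complex) \<Rightarrow> (nat \<Rightarrow> nat \<Rightarrow> complex) \<Rightarrow> complex" where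
  "regulator \<Lambda> r \<phi> = (1/2) * (\<Sum>a<\<Lambda>. \<Sum>b<\<Lambda>. \<Sum>c<\<Lambda>. \<Sum>d<\<Lambda>. \<phi> a b * r a b c d * \<phi> c d)"

definition source :: "nat \<Rightarrow> (nat \<times> nat \<Rightarrow> complex) \<Rightarrow> (nat \<Rightarrow> nat \<Rightarrow> complex) \<Rightarrow> complex" where
  "source \<Lambda> J \<phi> = (\<Sum>a<\<Lambda>. \<Sum>b<\<Lambda>. J (a, b) * \<phi> a b)"

definition integrand ::
  "nat \<Rightarrow> (nat \<Rightarrow> real) \<Rightarrow> nat \<Rightarrow> (nat \<Rightarrow> nat \<Rightarrow> nat \<Rightarrow> nat \<Rightarrow> complex) \<Rightarrow> (nat \<times> nat \<Rightarrow> complex)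
   \<Rightarrow> (nat \<times> nat \<Rightarrow> real) \<Rightarrow> complex" where
  "integrand \<Lambda> g K r J x =
     exp (- trace_action \<Lambda> g K (herm x) - regulator \<Lambda> r (herm x) + source \<Lambda> J (herm x))"

definition Zpart ::
  "nat \<Rightarrow> (nat \<Rightarrow> real) \<Rightarrow> nat \<Rightarrow> (nat \<Rightarrow> nat \<Rightarrow> nat \<Rightarrow> nat \<Rightarrow> complex) \<Rightarrow> (nat \<times> nat \<Rightarrow> complex) \<Rightarrow> complex" where
  "Zpart \<Lambda> g K r J = integral\<^sup>L (herm_lebesgue \<Lambda>) (integrand \<Lambda> g K r J)"

definition pderivJ :: "((nat \<times> nat \<Rightarrow> complex) \<Rightarrow> complex) \<Rightarrow> nat \<times> nat \<Rightarrow> (nat \<times> nat \<Rightarrow> complex) \<Rightarrow> complex" where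
  "pderivJ F p J = deriv (\<lambda>z. F (J(p := z))) (J p)"

end

theory Submission
  imports Defs
begin

definition ek :: "nat \<times> nat \<Rightarrow> nat \<times> nat \<Rightarrow> real" where
  "ek k = (\<lambda>q. if q = k then 1 else 0)"

lemma herm_alt: "herm x u v = (if u = v then complex_of_real (x (u,u))
   else if u < v then complex_of_real (x (u,v)) + \<i> * complex_of_real (x (v,u))
   else complex_of_real (x (v,u)) - \<i> * complex_of_real (x (u,v)))"
  by (simp add: herm_def complex_eq_iff)

lemma herm_upd: "herm (x(k:=s)) a b = herm x a b + complex_of_real (s - x k) * herm (ek k) a b"
  by (auto simp: herm_alt ek_def algebra_simps)

inductive pf :: "nat \<Rightarrow> ((nat \<times> nat \<Rightarrow> real) \<Rightarrow> complex) \<Rightarrow> bool" for L :: nat where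
  pf_const: "pf L (\<lambda>x. c)"
| pf_herm: "u < L \<Longrightarrow> v < L \<Longrightarrow> pf L (\<lambda>x. herm x u v)"
| pf_add: "pf L P \<Longrightarrow> pf L Q \<Longrightarrow> pf L (\<lambda>x. P x + Q x)"
| pf_mult: "pf L P \<Longrightarrow> pf L Q \<Longrightarrow> pf L (\<lambda>x. P x * Q x)"

lemma pf_diff: "pf L P \<Longrightarrow> pf L Q \<Longrightarrow> pf L (\<lambda>x. P x - Q x)"
proof -
  assume "pf L P" "pf L Q"
  then have "pf L (\<lambda>x. P x + (-1) * Q x)" by (intro pf.intros)
  then show ?thesis by simp
qed

lemma pf_uminus: "pf L P \<Longrightarrow> pf L (\<lambda>x. - P x)"
  using pf_diff[OF pf_const[of L 0]] by simp

lemma pf_sum: "finite A \<Longrightarrow> (\<And>i. i \<in> A \<Longrightarrow> pf L (f i)) \<Longrightarrow> pf L (\<lambda>x. \<Sum>i\<in>A. f i x)"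
proof (induction A rule: finite_induct)
  case empty then show ?case using pf_const[of L 0] by simp
next
  case (insert a A) then show ?case by (simp add: pf_add)
qed

definition pl :: "(nat \<times> nat \<Rightarrow> real) \<Rightarrow> (nat \<times> nat) list \<Rightarrow> complex" where
  "pl x ms = (\<Prod>p\<leftarrow>ms. herm x (fst p) (snd p))"

definition rep :: "(complex \<times> (nat \<times> nat) list) list \<Rightarrow> (nat \<times> nat \<Rightarrow> real) \<Rightarrow> complex" where
  "rep Ls x = (\<Sum>cm\<leftarrow>Ls. fst cm * pl x (snd cm))"

lemma rep_append: "rep (A @ B) x = rep A x + rep B x"
  by (simp add: rep_def)

lemma rep_mult_single: "rep A x * (d * pl x n) = rep (map (\<lambda>cm. (fst cm * d, snd cm @ n)) A) x"
  by (induction A) (auto simp: rep_def pl_def algebra_simps)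

lemma rep_mult: "rep A x * rep B x = rep (concat (map (\<lambda>dn. map (\<lambda>cm. (fst cm * fst dn, snd cm @ snd dn)) A) B)) x"
proof (induction B)
  case Nil then show ?case by (simp add: rep_def)
next
  case (Cons dn B)
  have "rep A x * rep (dn # B) x = rep A x * (fst dn * pl x (snd dn)) + rep A x * rep B x"
    by (simp add: rep_def distrib_left)
  then show ?case using Cons by (simp add: rep_mult_single rep_append)
qed

lemma pf_rep: "pf L P \<Longrightarrow> \<exists>Ls. (\<forall>cm\<in>set Ls. set (snd cm) \<subseteq> {..<L} \<times> {..<L}) \<and> P = rep Ls"
proof (induction rule: pf.induct)
  case (pf_const c)
  show ?case by (rule exI[of _ "[(c, [])]"]) (auto simp: rep_def pl_def)
next
  case (pf_herm u v)
  then show ?case by (intro exI[of _ "[(1, [(u,v)])]"]) (auto simp: rep_def pl_def)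
next
  case (pf_add P Q)
  then obtain A B where "\<forall>cm\<in>set A. set (snd cm) \<subseteq> {..<L} \<times> {..<L}" "P = rep A"
     "\<forall>cm\<in>set B. set (snd cm) \<subseteq> {..<L} \<times> {..<L}" "Q = rep B" by blast
  then show ?case by (intro exI[of _ "A @ B"]) (auto simp: rep_append)
next
  case (pf_mult P Q)
  then obtain A B where "\<forall>cm\<in>set A. set (snd cm) \<subseteq> {..<L} \<times> {..<L}" "P = rep A"
     "\<forall>cm\<in>set B. set (snd cm) \<subseteq> {..<L} \<times> {..<L}" "Q = rep B" by blast
  then show ?case
    by (intro exI[of _ "concat (map (\<lambda>dn. map (\<lambda>cm. (fst cm * fst dn, snd cm @ snd dn)) A) B)"])
       (auto simp: rep_mult)
qed

lemma meas_coord: "k \<in> I \<Longrightarrow> (\<lambda>x. x k) \<in> borel_measurable (PiM I (\<lambda>_. lborel :: real measure))"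
  by (metis measurable_component_singleton measurable_lborel1)

lemma meas_herm: "u < L \<Longrightarrow> v < L \<Longrightarrow> (\<lambda>x. herm x u v) \<in> borel_measurable (herm_lebesgue L)"
  unfolding herm_lebesgue_def herm_alt
  by (auto intro!: borel_measurable_add borel_measurable_times borel_measurable_diff
        measurable_compose[OF meas_coord borel_measurable_of_real])

lemma pf_meas: "pf L P \<Longrightarrow> P \<in> borel_measurable (herm_lebesgue L)"
  by (induction rule: pf.induct) (auto intro: meas_herm)


definition mmul :: "nat \<Rightarrow> (nat \<Rightarrow> nat \<Rightarrow> complex) \<Rightarrow> (nat \<Rightarrow> nat \<Rightarrow> complex) \<Rightarrow> nat \<Rightarrow> nat \<Rightarrow> complex" where
  "mmul L A B = (\<lambda>i j. \<Sum>l<L. A i l * B l j)"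

definition eqL :: "nat \<Rightarrow> (nat \<Rightarrow> nat \<Rightarrow> complex) \<Rightarrow> (nat \<Rightarrow> nat \<Rightarrow> complex) \<Rightarrow> bool" where
  "eqL L A B \<longleftrightarrow> (\<forall>i<L. \<forall>j<L. A i j = B i j)"

lemma mpow_Suc_mmul: "mpow L A (Suc k) = mmul L (mpow L A k) A"
  by (simp add: mmul_def)

declare mpow.simps(2)[simp del]

lemma mmul_assoc: "mmul L (mmul L A B) C = mmul L A (mmul L B C)"
  unfolding mmul_def
  by (auto simp: sum_distrib_left sum_distrib_right mult.assoc intro!: ext sum.swap)

lemma mmul_cong: "eqL L A A' \<Longrightarrow> eqL L B B' \<Longrightarrow> eqL L (mmul L A B) (mmul L A' B')"
  unfolding eqL_def mmul_def by (auto intro!: sum.cong)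

lemma mmul_diff_left: "mmul L (\<lambda>i j. A i j - B i j) C = (\<lambda>i j. mmul L A C i j - mmul L B C i j)"
  unfolding mmul_def by (auto simp: algebra_simps sum_subtractf)

lemma mmul_diff_right: "mmul L C (\<lambda>i j. A i j - B i j) = (\<lambda>i j. mmul L C A i j - mmul L C B i j)"
  unfolding mmul_def by (auto simp: algebra_simps sum_subtractf)

lemma sum_delta_l: "(i::nat) < L \<Longrightarrow> (\<Sum>l<L. (if i = l then 1 else 0) * (f l::complex)) = f i"
  by (subst sum.cong[OF refl, of _ _ "\<lambda>l. if i = l then f l else 0"]) auto

lemma sum_delta_r: "(j::nat) < L \<Longrightarrow> (\<Sum>l<L. (f l::complex) * (if l = j then 1 else 0)) = f j"
  by (subst sum.cong[OF refl, of _ _ "\<lambda>l. if j = l then f l else 0"]) auto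

lemma mmul_id_left: "eqL L (mmul L (mpow L A 0) B) B"
  unfolding eqL_def mmul_def by (auto simp: sum_delta_l)

lemma mmul_id_right: "eqL L (mmul L B (mpow L A 0)) B"
  unfolding eqL_def mmul_def by (auto simp: sum_delta_r)

lemma eqL_refl[simp]: "eqL L A A" by (simp add: eqL_def)
lemma eqL_sym: "eqL L A B \<Longrightarrow> eqL L B A" by (simp add: eqL_def)
lemma eqL_trans[trans]: "eqL L A B \<Longrightarrow> eqL L B C \<Longrightarrow> eqL L A C" by (simp add: eqL_def)

lemma mpow_comm: "eqL L (mmul L A (mpow L A k)) (mpow L A (Suc k))"
proof (induction k)
  case 0
  show ?case using eqL_trans[OF mmul_id_right[of L A A] eqL_sym[OF mmul_id_left[of L A A]]]
    by (simp only: mpow_Suc_mmul)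
next
  case (Suc k)
  have "eqL L (mmul L A (mpow L A (Suc k))) (mmul L (mmul L A (mpow L A k)) A)"
    by (simp add: mpow_Suc_mmul mmul_assoc)
  also have "eqL L \<dots> (mmul L (mpow L A (Suc k)) A)"
    by (rule mmul_cong[OF Suc eqL_refl])
  finally show ?case by (simp add: mpow_Suc_mmul)
qed

fun dpw :: "nat \<Rightarrow> (nat \<Rightarrow> nat \<Rightarrow> complex) \<Rightarrow> (nat \<Rightarrow> nat \<Rightarrow> complex) \<Rightarrow> nat \<Rightarrow> nat \<Rightarrow> nat \<Rightarrow> complex" where
  "dpw L A Y 0 = (\<lambda>i j. 0)"
| "dpw L A Y (Suc k) = (\<lambda>i j. \<Sum>l<L. dpw L A Y k i l * A l j + mpow L A k i l * Y l j)"

lemma dpw_Suc_mmul: "dpw L A Y (Suc k) = (\<lambda>i j. mmul L (dpw L A Y k) A i j + mmul L (mpow L A k) Y i j)"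
  by (simp add: mmul_def sum.distrib)

declare dpw.simps(2)[simp del]

lemma eqL_diff: "eqL L A A' \<Longrightarrow> eqL L B B' \<Longrightarrow> eqL L (\<lambda>i j. A i j - B i j) (\<lambda>i j. A' i j - B' i j)"
  by (simp add: eqL_def)

lemma eqL_add: "eqL L A A' \<Longrightarrow> eqL L B B' \<Longrightarrow> eqL L (\<lambda>i j. A i j + B i j) (\<lambda>i j. A' i j + B' i j)"
  by (simp add: eqL_def)

lemma dpw_comm:
  "eqL L (dpw L A (\<lambda>p q. mmul L X A p q - mmul L A X p q) k)
         (\<lambda>p q. mmul L X (mpow L A k) p q - mmul L (mpow L A k) X p q)"
proof (induction k)
  case 0
  have "eqL L (\<lambda>p q. mmul L X (mpow L A 0) p q - mmul L (mpow L A 0) X p q) (\<lambda>p q. X p q - X p q)"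
    by (rule eqL_diff[OF mmul_id_right mmul_id_left])
  then show ?case by (simp add: eqL_def)
next
  case (Suc k)
  let ?C = "\<lambda>p q. mmul L X A p q - mmul L A X p q"
  let ?P = "mpow L A k"
  have "eqL L (dpw L A ?C (Suc k)) (\<lambda>i j. mmul L (\<lambda>p q. mmul L X ?P p q - mmul L ?P X p q) A i j + mmul L ?P ?C i j)"
    unfolding dpw_Suc_mmul by (rule eqL_add[OF mmul_cong[OF Suc eqL_refl] eqL_refl])
  also have "(\<lambda>i j. mmul L (\<lambda>p q. mmul L X ?P p q - mmul L ?P X p q) A i j + mmul L ?P ?C i j)
     = (\<lambda>i j. mmul L X (mpow L A (Suc k)) i j - mmul L (mmul L ?P A) X i j)"
    by (simp add: mmul_diff_left mmul_diff_right mmul_assoc mpow_Suc_mmul)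
  also have "(\<lambda>i j. mmul L X (mpow L A (Suc k)) i j - mmul L (mmul L ?P A) X i j)
     = (\<lambda>i j. mmul L X (mpow L A (Suc k)) i j - mmul L (mpow L A (Suc k)) X i j)"
    by (simp add: mpow_Suc_mmul)
  finally show ?case .
qed

lemma mtrace_eqL: "eqL L A B \<Longrightarrow> mtrace L A = mtrace L B"
  by (simp add: eqL_def mtrace_def)

lemma mtrace_comm: "mtrace L (\<lambda>p q. mmul L X P p q - mmul L P X p q) = 0"
  unfolding mtrace_def mmul_def sum_subtractf
  by (subst sum.swap) (simp add: mult.commute)

lemma trace_dpw_comm: "mtrace L (dpw L A (\<lambda>p q. mmul L X A p q - mmul L A X p q) k) = 0"
  using mtrace_eqL[OF dpw_comm[of L A X k]] mtrace_comm by simp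

lemma dpw_cong: "eqL L Y Y' \<Longrightarrow> eqL L (dpw L A Y k) (dpw L A Y' k)"
proof (induction k)
  case 0 then show ?case by simp
next
  case (Suc k) then show ?case
    unfolding dpw_Suc_mmul by (intro eqL_add mmul_cong) auto
qed

lemma dpw_lin: "dpw L A (\<lambda>p q. \<Sum>j\<in>S. c j * Y j p q) k = (\<lambda>p q. \<Sum>j\<in>S. c j * dpw L A (Y j) k p q)"
proof (induction k)
  case 0 then show ?case by simp
next
  case (Suc k) then show ?case
    unfolding dpw.simps(2)
    apply (auto intro!: ext simp: sum_distrib_left sum_distrib_right sum.distrib algebra_simps)
    apply (subst (1 2) sum.swap)
    by simp
qed

lemma dpw_diff: "dpw L A (\<lambda>p q. Y p q - Z p q) k = (\<lambda>p q. dpw L A Y k p q - dpw L A Z k p q)"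
proof (induction k)
  case 0 then show ?case by simp
next
  case (Suc k) then show ?case
    unfolding dpw.simps(2)
    by (auto intro!: ext simp: sum_subtractf[symmetric] algebra_simps intro!: sum.cong)
qed

lemma mpow_deriv:
  "((\<lambda>t. mpow L (\<lambda>i j. A i j + t * Y i j) n p q) has_field_derivative
      dpw L (\<lambda>i j. A i j + t0 * Y i j) Y n p q) (at t0)"
proof (induction n arbitrary: p q)
  case 0 then show ?case by simp
next
  case (Suc n)
  show ?case
    unfolding mpow.simps(2) dpw.simps(2)
    by (rule derivative_eq_intros Suc refl | simp add: ac_simps)+
qed


definition ex :: "nat \<Rightarrow> (nat \<Rightarrow> real) \<Rightarrow> nat \<Rightarrow> (nat \<Rightarrow> nat \<Rightarrow> nat \<Rightarrow> nat \<Rightarrow> complex) \<Rightarrow> (nat \<times> nat \<Rightarrow> complex)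
   \<Rightarrow> (nat \<Rightarrow> nat \<Rightarrow> complex) \<Rightarrow> complex" where
  "ex L g K r J A = - trace_action L g K A - regulator L r A + source L J A"

definition dex :: "nat \<Rightarrow> (nat \<Rightarrow> real) \<Rightarrow> nat \<Rightarrow> (nat \<Rightarrow> nat \<Rightarrow> nat \<Rightarrow> nat \<Rightarrow> complex) \<Rightarrow> (nat \<times> nat \<Rightarrow> complex)
   \<Rightarrow> (nat \<Rightarrow> nat \<Rightarrow> complex) \<Rightarrow> (nat \<Rightarrow> nat \<Rightarrow> complex) \<Rightarrow> complex" where
  "dex L g K r J A Y = - (\<Sum>k\<le>K. complex_of_real (g k) * mtrace L (dpw L A Y k))
     - (1/2) * (\<Sum>a<L. \<Sum>b<L. \<Sum>c<L. \<Sum>d<L. Y a b * r a b c d * A c d + A a b * r a b c d * Y c d)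
     + (\<Sum>a<L. \<Sum>b<L. J (a, b) * Y a b)"

lemma integrand_ex: "integrand L g K r J x = exp (ex L g K r J (herm x))"
  by (simp add: integrand_def ex_def)

lemma ex_deriv:
  "((\<lambda>t. ex L g K r J (\<lambda>i j. A i j + t * Y i j)) has_field_derivative
      dex L g K r J (\<lambda>i j. A i j + t0 * Y i j) Y) (at t0)"
  unfolding ex_def dex_def trace_action_def mtrace_def regulator_def source_def
  by (rule derivative_eq_intros mpow_deriv refl | simp add: algebra_simps sum.distrib sum_distrib_left)+

definition Em :: "nat \<Rightarrow> nat \<Rightarrow> nat \<Rightarrow> nat \<Rightarrow> complex" where
  "Em i j = (\<lambda>p q. if p = i \<and> q = j then 1 else 0)"

lemma sum2_delta: "i < (L::nat) \<Longrightarrow> j < L \<Longrightarrow> (\<Sum>a<L. \<Sum>b<L. (if a = i \<and> b = j then 1 else 0) * f a b) = (f i j :: complex)"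
proof -
  assume ij: "i < L" "j < L"
  have "(\<Sum>a<L. \<Sum>b<L. (if a = i \<and> b = j then 1 else 0) * f a b) = (\<Sum>a<L. \<Sum>b<L. if (a, b) = (i, j) then f a b else 0)"
    by (intro sum.cong) auto
  also have "\<dots> = (\<Sum>ab\<in>{..<L} \<times> {..<L}. if ab = (i, j) then f (fst ab) (snd ab) else 0)"
    by (simp add: sum.cartesian_product split_beta prod_eq_iff)
  also have "\<dots> = f i j" using ij by (subst sum.delta) auto
  finally show ?thesis .
qed

lemma mtrace_lin: "mtrace L (\<lambda>p q. \<Sum>j\<in>S. c j * M j p q) = (\<Sum>j\<in>S. c j * mtrace L (M j))"
  unfolding mtrace_def by (subst sum.swap) (simp add: sum_distrib_left)

lemma mtrace_diff: "mtrace L (\<lambda>p q. M p q - N p q) = mtrace L M - mtrace L N"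
  unfolding mtrace_def by (simp add: sum_subtractf)

lemma sum_if_and_l: "(\<Sum>l\<in>S. if P \<and> Q l then f l else 0) = (if P then (\<Sum>l\<in>S. if Q l then f l else 0) else 0)"
  by auto

lemma sum_if_and_r: "(\<Sum>l\<in>S. if Q l \<and> P then f l else 0) = (if P then (\<Sum>l\<in>S. if Q l then f l else 0) else 0)"
  by auto

lemma trace_part_zero:
  assumes "a < L" "c < L"
  shows "(\<Sum>j<L. A c j * mtrace L (dpw L A (Em a j) k)) - (\<Sum>i<L. A i a * mtrace L (dpw L A (Em i c) k)) = 0"
proof -
  have "(\<Sum>j<L. A c j * mtrace L (dpw L A (Em a j) k)) - (\<Sum>i<L. A i a * mtrace L (dpw L A (Em i c) k))
     = mtrace L (dpw L A (\<lambda>p q. \<Sum>j<L. A c j * Em a j p q) k) - mtrace L (dpw L A (\<lambda>p q. \<Sum>i<L. A i a * Em i c p q) k)"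
    by (simp add: dpw_lin mtrace_lin)
  also have "\<dots> = mtrace L (dpw L A (\<lambda>p q. (\<Sum>j<L. A c j * Em a j p q) - (\<Sum>i<L. A i a * Em i c p q)) k)"
    by (simp add: dpw_diff mtrace_diff)
  also have "\<dots> = mtrace L (dpw L A (\<lambda>p q. mmul L (Em a c) A p q - mmul L A (Em a c) p q) k)"
  proof (rule mtrace_eqL, rule dpw_cong)
    show "eqL L (\<lambda>p q. (\<Sum>j<L. A c j * Em a j p q) - (\<Sum>i<L. A i a * Em i c p q))
       (\<lambda>p q. mmul L (Em a c) A p q - mmul L A (Em a c) p q)"
      unfolding eqL_def mmul_def Em_def using assms
      by (auto simp: if_distrib[of "\<lambda>z. _ * z"] if_distrib[of "\<lambda>z. z * _"] sum_if_and_l sum_if_and_r cong: if_cong)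
  qed
  also have "\<dots> = 0" by (rule trace_dpw_comm)
  finally show ?thesis .
qed

lemma dex_Em:
  assumes rs: "\<And>a b c d. a < L \<Longrightarrow> b < L \<Longrightarrow> c < L \<Longrightarrow> d < L \<Longrightarrow> r a b c d = r c d a b"
    and ij: "i < L" "j < L"
  shows "dex L g K r J A (Em i j) = - (\<Sum>k\<le>K. complex_of_real (g k) * mtrace L (dpw L A (Em i j) k))
     - (\<Sum>c<L. \<Sum>d<L. r i j c d * A c d) + J (i, j)"
proof -
  have p1: "(\<Sum>a<L. \<Sum>b<L. \<Sum>c<L. \<Sum>d<L. Em i j a b * r a b c d * A c d) = (\<Sum>c<L. \<Sum>d<L. r i j c d * A c d)"
  proof -
    have "(\<Sum>a<L. \<Sum>b<L. \<Sum>c<L. \<Sum>d<L. Em i j a b * r a b c d * A c d)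
       = (\<Sum>a<L. \<Sum>b<L. (if a = i \<and> b = j then 1 else 0) * (\<Sum>c<L. \<Sum>d<L. r a b c d * A c d))"
      by (simp add: Em_def sum_distrib_left mult.assoc)
    also have "\<dots> = (\<Sum>c<L. \<Sum>d<L. r i j c d * A c d)" using ij by (rule sum2_delta)
    finally show ?thesis .
  qed
  have p2: "(\<Sum>a<L. \<Sum>b<L. \<Sum>c<L. \<Sum>d<L. A a b * r a b c d * Em i j c d) = (\<Sum>c<L. \<Sum>d<L. r i j c d * A c d)"
  proof -
    have "(\<Sum>a<L. \<Sum>b<L. \<Sum>c<L. \<Sum>d<L. A a b * r a b c d * Em i j c d)
       = (\<Sum>a<L. \<Sum>b<L. (\<Sum>c<L. \<Sum>d<L. (if c = i \<and> d = j then 1 else 0) * (A a b * r a b c d)))"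
      by (simp add: Em_def mult.commute)
    also have "\<dots> = (\<Sum>a<L. \<Sum>b<L. A a b * r a b i j)"
      using ij by (simp add: sum2_delta)
    also have "\<dots> = (\<Sum>a<L. \<Sum>b<L. r i j a b * A a b)"
      using ij by (intro sum.cong refl) (simp add: rs mult.commute)
    finally show ?thesis .
  qed
  have p3: "(\<Sum>a<L. \<Sum>b<L. J (a, b) * Em i j a b) = J (i, j)"
    using sum2_delta[OF ij, of "\<lambda>a b. J (a, b)"] by (simp add: Em_def mult.commute)
  show ?thesis
    unfolding dex_def p3 sum.distrib p1 p2 by simp
qed

lemma ward_alg:
  assumes rs: "\<And>a b c d. a < L \<Longrightarrow> b < L \<Longrightarrow> c < L \<Longrightarrow> d < L \<Longrightarrow> r a b c d = r c d a b"
    and ac: "a < L" "c < L"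
  shows "(\<Sum>j<L. A c j * dex L g K r J A (Em a j)) - (\<Sum>i<L. A i a * dex L g K r J A (Em i c))
    = - (\<Sum>b<L. \<Sum>d<L. \<Sum>e<L. r a b d e * (A c b * A d e) - r b c d e * (A b a * A d e))
      + (\<Sum>b<L. J (a, b) * A c b - J (b, c) * A b a)"
proof -
  let ?S = "\<lambda>i j. (\<Sum>k\<le>K. complex_of_real (g k) * mtrace L (dpw L A (Em i j) k))"
  let ?R = "\<lambda>i j. (\<Sum>d<L. \<Sum>e<L. r i j d e * A d e)"
  have "(\<Sum>j<L. A c j * dex L g K r J A (Em a j)) - (\<Sum>i<L. A i a * dex L g K r J A (Em i c))
     = (\<Sum>j<L. A c j * (- ?S a j - ?R a j + J (a, j))) - (\<Sum>i<L. A i a * (- ?S i c - ?R i c + J (i, c)))"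
    using ac by (simp add: dex_Em[OF rs])
  also have "\<dots> = - ((\<Sum>j<L. A c j * ?S a j) - (\<Sum>i<L. A i a * ?S i c))
      - ((\<Sum>j<L. A c j * ?R a j) - (\<Sum>i<L. A i a * ?R i c))
      + ((\<Sum>j<L. A c j * J (a, j)) - (\<Sum>i<L. A i a * J (i, c)))"
    by (simp add: algebra_simps sum.distrib sum_subtractf)
  also have "(\<Sum>j<L. A c j * ?S a j) - (\<Sum>i<L. A i a * ?S i c)
     = (\<Sum>k\<le>K. complex_of_real (g k) * ((\<Sum>j<L. A c j * mtrace L (dpw L A (Em a j) k)) - (\<Sum>i<L. A i a * mtrace L (dpw L A (Em i c) k))))"
    by (simp add: sum_distrib_left algebra_simps sum_subtractf sum.swap[of _ "{..K}"])
  also have "\<dots> = 0" using trace_part_zero[OF ac] by simp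
  also have "(\<Sum>j<L. A c j * ?R a j) - (\<Sum>i<L. A i a * ?R i c)
     = (\<Sum>b<L. \<Sum>d<L. \<Sum>e<L. r a b d e * (A c b * A d e) - r b c d e * (A b a * A d e))"
    by (simp add: sum_distrib_left algebra_simps sum_subtractf)
  also have "(\<Sum>j<L. A c j * J (a, j)) - (\<Sum>i<L. A i a * J (i, c)) = (\<Sum>b<L. J (a, b) * A c b - J (b, c) * A b a)"
    by (simp add: algebra_simps sum_subtractf)
  finally show ?thesis by simp
qed


lemma ind_tendsto:
  fixes f :: "real \<Rightarrow> complex"
  and A :: "real \<Rightarrow> real set"
  assumes f: "integrable lborel f" and A: "\<And>T. A T \<in> sets borel" and B: "B \<in> sets borel"
    and ev: "\<And>x. eventually (\<lambda>T. indicator (A T) x = (indicator B x :: real)) at_top"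
  shows "((\<lambda>T. \<integral>x. indicator (A T) x *\<^sub>R f x \<partial>lborel) \<longlongrightarrow> (\<integral>x. indicator B x *\<^sub>R f x \<partial>lborel)) at_top"
proof (rule integral_dominated_convergence_at_top[where w="\<lambda>x. norm (f x)"])
  have fm: "f \<in> borel_measurable lborel" using f by auto
  show "(\<lambda>x. indicator B x *\<^sub>R f x) \<in> borel_measurable lborel"
    using fm B by (intro borel_measurable_scaleR borel_measurable_indicator) auto
  show "(\<lambda>x. indicator (A T) x *\<^sub>R f x) \<in> borel_measurable lborel" for T
    using fm A by (intro borel_measurable_scaleR borel_measurable_indicator) auto
  show "integrable lborel (\<lambda>x. norm (f x))" using f by auto
  show "AE x in lborel. ((\<lambda>T. indicator (A T) x *\<^sub>R f x) \<longlongrightarrow> indicator B x *\<^sub>R f x) at_top"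
  proof (rule AE_I2)
    fix x
    show "((\<lambda>T. indicator (A T) x *\<^sub>R f x) \<longlongrightarrow> indicator B x *\<^sub>R f x) at_top"
      by (rule tendsto_eventually) (rule eventually_mono[OF ev[of x]], simp)
  qed
  show "\<forall>\<^sub>F T in at_top. AE x in lborel. norm (indicator (A T) x *\<^sub>R f x) \<le> norm (f x)"
    by (auto split: split_indicator)
qed

lemma limit_zero:
  fixes g :: "real \<Rightarrow> complex"
  assumes g: "integrable lborel g" and lim: "(g \<longlongrightarrow> L) at_top"
  shows "L = 0"
proof -
  have gm[measurable]: "g \<in> borel_measurable borel" using g by auto
  define h where "h T = (\<integral>s. indicator {0..1} s *\<^sub>R g (T + s) \<partial>lborel)" for T
  have intI: "integrable lborel (indicator {0..1::real} :: real \<Rightarrow> real)"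
    by (rule integrable_real_indicator) auto
  have 1: "(h \<longlongrightarrow> (\<integral>s. indicator {0..1} (s::real) *\<^sub>R L \<partial>lborel)) at_top"
    unfolding h_def
  proof (rule integral_dominated_convergence_at_top[where w="\<lambda>s::real. indicator {0..1::real} s * (norm L + 1)"])
    show "(\<lambda>s. indicator {0..1} (s::real) *\<^sub>R L) \<in> borel_measurable lborel"
      by (intro borel_measurable_scaleR borel_measurable_indicator) auto
    have pm: "(\<lambda>s. T + s) \<in> borel_measurable lborel" for T :: real
      by (intro borel_measurable_add) auto
    show "(\<lambda>s. indicator {0..1} (s::real) *\<^sub>R g (T + s)) \<in> borel_measurable lborel" for T
      using measurable_compose[OF pm[of T] gm]
      by (intro borel_measurable_scaleR borel_measurable_indicator) (auto simp: o_def atLeastAtMost_borel)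
    show "integrable lborel (\<lambda>s. indicator {0..1} (s::real) * (norm L + 1))"
      by (rule integrable_mult_right_iff[THEN iffD2, OF disjI2, OF intI])
    show "AE s in lborel. ((\<lambda>T. indicator {0..1} s *\<^sub>R g (T + s)) \<longlongrightarrow> indicator {0..1} s *\<^sub>R L) at_top"
    proof (rule AE_I2)
      fix s :: real
      have "filterlim (\<lambda>T. s + T) at_top at_top"
        by (rule filterlim_tendsto_add_at_top[OF tendsto_const filterlim_ident])
      then have "filterlim (\<lambda>T. T + s) at_top at_top" by (simp add: add.commute)
      then have "((\<lambda>T. g (T + s)) \<longlongrightarrow> L) at_top" by (rule filterlim_compose[OF lim])
      then show "((\<lambda>T. indicator {0..1} s *\<^sub>R g (T + s)) \<longlongrightarrow> indicator {0..1} s *\<^sub>R L) at_top"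
        by (intro tendsto_intros)
    qed
    from tendstoD[OF lim, of 1] obtain N where N: "\<And>t. t \<ge> N \<Longrightarrow> dist (g t) L < 1"
      by (auto simp: eventually_at_top_linorder)
    show "\<forall>\<^sub>F T in at_top. AE s in lborel. norm (indicator {0..1} s *\<^sub>R g (T + s)) \<le> indicator {0..1} s * (norm L + 1)"
      unfolding eventually_at_top_linorder
    proof (intro exI[of _ N] allI impI AE_I2)
      fix T s :: real assume "T \<ge> N"
      show "norm (indicator {0..1} s *\<^sub>R g (T + s)) \<le> indicator {0..1} s * (norm L + 1)"
      proof (cases "s \<in> {0..1}")
        case True
        then have "dist (g (T + s)) L < 1" using N \<open>T \<ge> N\<close> by auto
        then have "norm (g (T + s)) \<le> norm L + 1"
          by (metis dist_norm add.commute le_less_trans less_imp_le norm_triangle_ineq2 diff_le_eq)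
        then show ?thesis using True by simp
      qed simp
    qed
  qed
  have "(\<integral>s. indicator {0..1} (s::real) *\<^sub>R L \<partial>lborel) = L"
    using intI by simp
  with 1 have 1: "(h \<longlongrightarrow> L) at_top" by simp
  have heq: "h T = (\<integral>t. indicator {T..T+1} t *\<^sub>R g t \<partial>lborel)" for T
  proof -
    have "(\<integral>t. indicator {T..T+1} t *\<^sub>R g t \<partial>lborel) = \<bar>1\<bar> *\<^sub>R (\<integral>x. indicator {T..T+1} (T + 1 * x) *\<^sub>R g (T + 1 * x) \<partial>lborel)"
      by (rule lborel_integral_real_affine) simp
    also have "\<dots> = h T" unfolding h_def
      by (simp, intro arg_cong[where f="integral\<^sup>L lborel"] ext) (auto split: split_indicator)
    finally show ?thesis by simp
  qed
  have 2: "(h \<longlongrightarrow> (\<integral>t. indicator {} (t::real) *\<^sub>R g t \<partial>lborel)) at_top"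
    unfolding heq
  proof (rule ind_tendsto[OF g])
    fix x :: real
    show "\<forall>\<^sub>F T in at_top. indicator {T..T + 1} x = (indicator {} x :: real)"
      unfolding eventually_at_top_linorder by (intro exI[of _ "x + 1"]) auto
  qed auto
  then have "(h \<longlongrightarrow> 0) at_top" by simp
  from tendsto_unique[OF _ 1 this] show "L = 0" by simp
qed

lemma FTC_line:
  fixes g g' :: "real \<Rightarrow> complex"
  assumes g: "integrable lborel g" and g': "integrable lborel g'" and cont: "continuous_on UNIV g'"
   and d: "\<And>t. (g has_vector_derivative g' t) (at t)"
  shows "integral\<^sup>L lborel g' = 0"
proof -
  have ftc: "(\<integral>x. indicator {a..b} x *\<^sub>R g' x \<partial>lborel) = g b - g a" if "a \<le> b" for a b :: real
    using that by (intro integral_FTC_atLeastAtMost)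
      (auto intro: has_vector_derivative_at_within d continuous_on_subset[OF cont])
  have pos: "((\<lambda>T. \<integral>x. indicator {0..T} x *\<^sub>R g' x \<partial>lborel) \<longlongrightarrow> (\<integral>x. indicator {0..} (x::real) *\<^sub>R g' x \<partial>lborel)) at_top"
  proof (rule ind_tendsto[OF g'])
    fix x :: real
    show "\<forall>\<^sub>F T in at_top. indicator {0..T} x = (indicator {0..} x :: real)"
      unfolding eventually_at_top_linorder by (intro exI[of _ x]) (auto split: split_indicator)
  qed auto
  have neg: "((\<lambda>T. \<integral>x. indicator {-T..0} x *\<^sub>R g' x \<partial>lborel) \<longlongrightarrow> (\<integral>x. indicator {..0} (x::real) *\<^sub>R g' x \<partial>lborel)) at_top"
  proof (rule ind_tendsto[OF g'])
    fix x :: real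
    show "\<forall>\<^sub>F T in at_top. indicator {-T..0} x = (indicator {..0} x :: real)"
      unfolding eventually_at_top_linorder by (intro exI[of _ "-x"]) (auto split: split_indicator)
  qed auto
  have tot: "((\<lambda>T. \<integral>x. indicator {-T..T} x *\<^sub>R g' x \<partial>lborel) \<longlongrightarrow> (\<integral>x. indicator UNIV (x::real) *\<^sub>R g' x \<partial>lborel)) at_top"
  proof (rule ind_tendsto[OF g'])
    fix x :: real
    show "\<forall>\<^sub>F T in at_top. indicator {-T..T} x = (indicator UNIV x :: real)"
      unfolding eventually_at_top_linorder by (intro exI[of _ "\<bar>x\<bar>"]) (auto split: split_indicator)
  qed auto
  have ev1: "\<forall>\<^sub>F T in at_top. g 0 + (\<integral>x. indicator {0..T} x *\<^sub>R g' x \<partial>lborel) = g T"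
    unfolding eventually_at_top_linorder by (intro exI[of _ 0]) (auto simp: ftc)
  have "((\<lambda>T. g 0 + (\<integral>x. indicator {0..T} x *\<^sub>R g' x \<partial>lborel)) \<longlongrightarrow> g 0 + (\<integral>x. indicator {0..} (x::real) *\<^sub>R g' x \<partial>lborel)) at_top"
    by (intro tendsto_add tendsto_const pos)
  then have gp: "(g \<longlongrightarrow> g 0 + (\<integral>x. indicator {0..} (x::real) *\<^sub>R g' x \<partial>lborel)) at_top"
    using tendsto_cong[OF ev1] by simp
  then have gp0: "(g \<longlongrightarrow> 0) at_top" using limit_zero[OF g gp] by simp
  have ev2: "\<forall>\<^sub>F T in at_top. g 0 - (\<integral>x. indicator {-T..0} x *\<^sub>R g' x \<partial>lborel) = g (-T)"
    unfolding eventually_at_top_linorder by (intro exI[of _ 0]) (auto simp: ftc)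
  have "((\<lambda>T. g 0 - (\<integral>x. indicator {-T..0} x *\<^sub>R g' x \<partial>lborel)) \<longlongrightarrow> g 0 - (\<integral>x. indicator {..0} (x::real) *\<^sub>R g' x \<partial>lborel)) at_top"
    by (intro tendsto_diff tendsto_const neg)
  then have gn: "((\<lambda>T. g (-T)) \<longlongrightarrow> g 0 - (\<integral>x. indicator {..0} (x::real) *\<^sub>R g' x \<partial>lborel)) at_top"
    using tendsto_cong[OF ev2] by simp
  have gi: "integrable lborel (\<lambda>x. g (- x))"
    using lborel_integrable_real_affine[OF g, of "-1" 0] by simp
  have gn0: "((\<lambda>T. g (-T)) \<longlongrightarrow> 0) at_top" using limit_zero[OF gi gn] gn by simp
  have ev3: "\<forall>\<^sub>F T in at_top. g T - g (-T) = (\<integral>x. indicator {-T..T} x *\<^sub>R g' x \<partial>lborel)"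
    unfolding eventually_at_top_linorder by (intro exI[of _ 0]) (auto simp: ftc)
  have "((\<lambda>T. g T - g (-T)) \<longlongrightarrow> 0 - 0) at_top" by (intro tendsto_diff gp0 gn0)
  then have "((\<lambda>T. \<integral>x. indicator {-T..T} x *\<^sub>R g' x \<partial>lborel) \<longlongrightarrow> 0) at_top"
    using tendsto_cong[OF ev3] by simp
  from tendsto_unique[OF _ tot this] show ?thesis by simp
qed


lemma AE_line_integrable:
  fixes G :: "('i \<Rightarrow> real) \<Rightarrow> complex"
  assumes J: "finite J" "k \<notin> J"
    and G: "integrable (PiM (insert k J) (\<lambda>_. lborel)) G"
  shows "AE x in PiM J (\<lambda>_. lborel). integrable lborel (\<lambda>t. G (x(k := t)))"
proof -
  interpret product_sigma_finite "\<lambda>_::'i. lborel :: real measure" by standard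
  interpret JJ: finite_product_sigma_finite "\<lambda>_::'i. lborel :: real measure" J by standard (rule J(1))
  interpret KK: finite_product_sigma_finite "\<lambda>_::'i. lborel :: real measure" "{k}" by standard simp
  interpret P: pair_sigma_finite "PiM J (\<lambda>_. lborel :: real measure)" "PiM {k} (\<lambda>_. lborel :: real measure)" ..
  have Gm: "G \<in> borel_measurable (PiM (insert k J) (\<lambda>_. lborel))" using G by auto
  have IJ: "J \<inter> {k} = {}" using J by auto
  have eq: "J \<union> {k} = insert k J" by auto
  have "integrable (PiM J (\<lambda>_. lborel) \<Otimes>\<^sub>M PiM {k} (\<lambda>_. lborel)) (\<lambda>xy. G (merge J {k} xy))"
  proof (rule integrable_distr[OF measurable_merge])
    have fk: "finite {k}" by simp
    show "integrable (distr (PiM J (\<lambda>_. lborel) \<Otimes>\<^sub>M PiM {k} (\<lambda>_. lborel)) (PiM (J \<union> {k}) (\<lambda>_. lborel)) (merge J {k})) G"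
      using distr_merge[OF IJ J(1) fk] eq G by metis
  qed
  from P.AE_integrable_fst'[OF this]
  have "AE x in PiM J (\<lambda>_. lborel). integrable (PiM {k} (\<lambda>_. lborel)) (\<lambda>y. G (merge J {k} (x, y)))" .
  then show ?thesis
  proof (rule AE_mp[OF _ AE_I2], intro impI)
    fix x assume x: "x \<in> space (PiM J (\<lambda>_. lborel :: real measure))"
      and int: "integrable (PiM {k} (\<lambda>_. lborel)) (\<lambda>y. G (merge J {k} (x, y)))"
    have fm: "(\<lambda>t. G (x(k := t))) \<in> borel_measurable lborel"
      using measurable_comp[OF measurable_component_update Gm, OF x \<open>k \<notin> J\<close>] unfolding comp_def .
    have "integrable (PiM {k} (\<lambda>_. lborel)) (\<lambda>y. G (x(k := y k)))"
    proof (rule Bochner_Integration.integrable_cong[THEN iffD1, OF refl _ int])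
      fix y assume "y \<in> space (PiM {k} (\<lambda>_. lborel :: real measure))"
      then show "G (merge J {k} (x, y)) = G (x(k := y k))"
        using x J by (auto intro!: arg_cong[where f=G] simp: merge_def space_PiM extensional_def PiE_def fun_eq_iff)
    qed
    then have "integrable (distr (PiM {k} (\<lambda>_. lborel)) lborel (\<lambda>y. y k)) (\<lambda>t. G (x(k := t)))"
      by (subst integrable_distr_eq[OF measurable_component_singleton[of k "{k}" "\<lambda>_. lborel"] fm]) auto
    then show "integrable lborel (\<lambda>t. G (x(k := t)))"
      using distr_singleton[of k] by simp
  qed
qed

lemma line_int_zero:
  fixes F F' :: "('i \<Rightarrow> real) \<Rightarrow> complex"
  assumes k: "k \<in> I" and fin: "finite I"
   and F: "integrable (PiM I (\<lambda>_. lborel)) F" and F': "integrable (PiM I (\<lambda>_. lborel)) F'"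
   and d: "\<And>x s. ((\<lambda>t. F (x(k:=t))) has_vector_derivative F' (x(k:=s))) (at s)"
   and c: "\<And>x. continuous_on UNIV (\<lambda>t. F' (x(k:=t)))"
  shows "integral\<^sup>L (PiM I (\<lambda>_. lborel)) F' = 0"
proof -
  interpret product_sigma_finite "\<lambda>_::'i. lborel :: real measure" by standard
  define J where "J = I - {k}"
  have IJ: "I = insert k J" "finite J" "k \<notin> J" using k fin by (auto simp: J_def)
  have "integral\<^sup>L (PiM I (\<lambda>_. lborel)) F' = (\<integral>x. (\<integral>y. F' (x(k:=y)) \<partial>lborel) \<partial>PiM J (\<lambda>_. lborel))"
    using product_integral_insert[OF IJ(2,3), of F'] F' IJ(1) by simp
  also have "\<dots> = 0"
  proof (rule integral_eq_zero_AE)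
    have a1: "AE x in PiM J (\<lambda>_. lborel). integrable lborel (\<lambda>t. F (x(k := t)))"
      using AE_line_integrable[OF IJ(2,3), of F] F IJ(1) by simp
    have a2: "AE x in PiM J (\<lambda>_. lborel). integrable lborel (\<lambda>t. F' (x(k := t)))"
      using AE_line_integrable[OF IJ(2,3), of F'] F' IJ(1) by simp
    show "AE x in PiM J (\<lambda>_. lborel). (\<integral>y. F' (x(k:=y)) \<partial>lborel) = 0"
      using a1 a2
    proof eventually_elim
      case (elim x)
      show ?case by (rule FTC_line[OF elim(1) elim(2) c d])
    qed
  qed
  finally show ?thesis .
qed


lemma pf_mpow: "j < L \<Longrightarrow> pf L (\<lambda>x. mpow L (herm x) n i j)"
proof (induction n arbitrary: i j)
  case 0 then show ?case by (simp add: pf_const)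
next
  case (Suc n) then show ?case
    unfolding mpow.simps(2) by (intro pf_sum pf_mult pf_herm) auto
qed

lemma pf_dpw: "j < L \<Longrightarrow> pf L (\<lambda>x. dpw L (herm x) Y n i j)"
proof (induction n arbitrary: i j)
  case 0 then show ?case by (simp add: pf_const)
next
  case (Suc n) then show ?case
    unfolding dpw.simps(2) by (intro pf_sum pf_mult pf_add pf_herm pf_mpow pf_const) auto
qed

lemma pf_ex: "pf L (\<lambda>x. ex L g K r J (herm x))"
  unfolding ex_def trace_action_def mtrace_def regulator_def source_def
  by (intro pf_add pf_diff pf_uminus pf_sum pf_mult pf_herm pf_mpow pf_const) auto

lemma pf_dex: "pf L (\<lambda>x. dex L g K r J (herm x) Y)"
  unfolding dex_def mtrace_def
  by (intro pf_add pf_diff pf_uminus pf_sum pf_mult pf_herm pf_dpw pf_const) auto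

lemma pf_cont: "pf L P \<Longrightarrow> continuous_on UNIV (\<lambda>t. P (x(k:=t)))"
proof (induction rule: pf.induct)
  case (pf_herm u v)
  show ?case unfolding herm_upd by (intro continuous_intros)
qed (auto intro: continuous_intros)

lemma E_cont: "continuous_on UNIV (\<lambda>t. integrand L g K r J (x(k:=t)))"
  unfolding integrand_ex by (intro continuous_intros pf_cont[OF pf_ex])

lemma line_deriv:
  "((\<lambda>t. herm (x(k:=t)) u v * integrand L g K r J (x(k:=t))) has_vector_derivative
     ((herm (ek k) u v + herm (x(k:=s)) u v * dex L g K r J (herm (x(k:=s))) (herm (ek k)))
        * integrand L g K r J (x(k:=s)))) (at s)"
proof -
  define H where "H = herm (ek k)"
  define A where "A = (\<lambda>i j. herm x i j - complex_of_real (x k) * H i j)"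
  have eq: "herm (x(k:=t)) = (\<lambda>i j. A i j + complex_of_real t * H i j)" for t
    by (auto simp: A_def H_def herm_upd algebra_simps intro!: ext)
  define \<psi> where "\<psi> z = (A u v + z * H u v) * exp (ex L g K r J (\<lambda>i j. A i j + z * H i j))" for z
  have "(\<psi> has_field_derivative
     (H u v * exp (ex L g K r J (\<lambda>i j. A i j + complex_of_real s * H i j))
      + (A u v + complex_of_real s * H u v) * (exp (ex L g K r J (\<lambda>i j. A i j + complex_of_real s * H i j))
          * dex L g K r J (\<lambda>i j. A i j + complex_of_real s * H i j) H))) (at (complex_of_real s))"
    unfolding \<psi>_def
    by (rule derivative_eq_intros ex_deriv refl | simp)+
  from has_vector_derivative_real_field[OF this]
  show ?thesis
    unfolding \<psi>_def integrand_ex eq H_def[symmetric]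
    by (simp add: algebra_simps)
qed

locale wm =
  fixes L :: nat and g :: "nat \<Rightarrow> real" and K :: nat and r :: "nat \<Rightarrow> nat \<Rightarrow> nat \<Rightarrow> nat \<Rightarrow> complex"
  assumes conv: "\<And>J' ms. set ms \<subseteq> {..<L} \<times> {..<L} \<Longrightarrow>
        integrable (herm_lebesgue L)
          (\<lambda>x. (\<Prod>p\<leftarrow>ms. herm x (fst p) (snd p)) * integrand L g K r J' x)"
begin

lemma pf_int: "pf L P \<Longrightarrow> integrable (herm_lebesgue L) (\<lambda>x. P x * integrand L g K r J' x)"
proof -
  assume "pf L P"
  from pf_rep[OF this] obtain Ls where Ls: "\<forall>cm\<in>set Ls. set (snd cm) \<subseteq> {..<L} \<times> {..<L}" "P = rep Ls"
    by blast
  have "integrable (herm_lebesgue L) (\<lambda>x. rep Ls x * integrand L g K r J' x)" using Ls(1)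
  proof (induction Ls)
    case Nil then show ?case by (simp add: rep_def)
  next
    case (Cons cm Ls)
    have eq: "rep (cm # Ls) x * integrand L g K r J' x
       = fst cm * (pl x (snd cm) * integrand L g K r J' x) + rep Ls x * integrand L g K r J' x" for x
      by (simp add: rep_def algebra_simps)
    have "integrable (herm_lebesgue L) (\<lambda>x. pl x (snd cm) * integrand L g K r J' x)"
      unfolding pl_def using Cons.prems by (intro conv) auto
    then have "integrable (herm_lebesgue L) (\<lambda>x. fst cm * (pl x (snd cm) * integrand L g K r J' x))"
      by (rule integrable_mult_right)
    moreover have "integrable (herm_lebesgue L) (\<lambda>x. rep Ls x * integrand L g K r J' x)"
      using Cons by auto
    ultimately show ?case unfolding eq by (rule Bochner_Integration.integrable_add)
  qed
  with Ls(2) show ?thesis by simp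
qed

lemma SD_real:
  assumes k: "k \<in> {..<L} \<times> {..<L}" and uv: "u < L" "v < L"
  shows "integral\<^sup>L (herm_lebesgue L)
    (\<lambda>x. (herm (ek k) u v + herm x u v * dex L g K r J (herm x) (herm (ek k))) * integrand L g K r J x) = 0"
  unfolding herm_lebesgue_def
proof (rule line_int_zero[OF k])
  show "integrable (PiM ({..<L} \<times> {..<L}) (\<lambda>_. lborel)) (\<lambda>x. herm x u v * integrand L g K r J x)"
    using pf_int[OF pf_herm[OF uv]] unfolding herm_lebesgue_def .
  show "integrable (PiM ({..<L} \<times> {..<L}) (\<lambda>_. lborel))
    (\<lambda>x. (herm (ek k) u v + herm x u v * dex L g K r J (herm x) (herm (ek k))) * integrand L g K r J x)"
    using pf_int[OF pf_add[OF pf_const pf_mult[OF pf_herm[OF uv] pf_dex]]] unfolding herm_lebesgue_def .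
  show "((\<lambda>t. herm (x(k:=t)) u v * integrand L g K r J (x(k:=t))) has_vector_derivative
     ((herm (ek k) u v + herm (x(k:=s)) u v * dex L g K r J (herm (x(k:=s))) (herm (ek k)))
        * integrand L g K r J (x(k:=s)))) (at s)" for x s
    by (rule line_deriv)
  show "continuous_on UNIV (\<lambda>t. (herm (ek k) u v + herm (x(k:=t)) u v * dex L g K r J (herm (x(k:=t))) (herm (ek k)))
        * integrand L g K r J (x(k:=t)))" for x
  proof -
    have c1: "continuous_on UNIV (\<lambda>t. herm (ek k) u v + herm (x(k:=t)) u v * dex L g K r J (herm (x(k:=t))) (herm (ek k)))"
      by (rule pf_cont[OF pf_add[OF pf_const pf_mult[OF pf_herm[OF uv] pf_dex]]])
    show ?thesis by (rule continuous_on_mult[OF c1 E_cont])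
  qed
qed auto

end


lemma exp_rem_bound: "norm (exp u - 1 - u) \<le> norm u ^ 2 * exp (norm u)" for u :: complex
proof -
  define a where "a = norm u"
  have a0: "a \<ge> 0" by (simp add: a_def)
  have eq: "exp u - 1 - u = (\<Sum>n. inverse (fact (n + 2)) *\<^sub>R (u ^ (n + 2)))"
    using exp_first_two_terms[of u] by simp
  have sa: "summable (\<lambda>n. a ^ n / fact n)"
    using summable_exp[of a] by (simp add: divide_inverse mult.commute)
  have s1: "summable (\<lambda>n. a ^ (n + 2) / fact (n + 2))"
    using summable_ignore_initial_segment[OF sa, of 2] by simp
  have nrm: "norm (inverse (fact (n + 2)) *\<^sub>R (u ^ (n + 2))) = a ^ (n + 2) / fact (n + 2)" for n
    by (simp add: a_def norm_power norm_mult divide_inverse mult.commute)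
  have "norm (exp u - 1 - u) \<le> (\<Sum>n. norm (inverse (fact (n + 2)) *\<^sub>R (u ^ (n + 2))))"
    unfolding eq by (rule summable_norm) (unfold nrm, rule s1)
  also have "\<dots> = (\<Sum>n. a ^ (n + 2) / fact (n + 2))" unfolding nrm ..
  also have "\<dots> \<le> (\<Sum>n. a ^ 2 * (a ^ n / fact n))"
  proof (rule suminf_le)
    show "a ^ (n + 2) / fact (n + 2) \<le> a ^ 2 * (a ^ n / fact n)" for n
    proof -
      have f: "(fact n :: real) \<le> fact (n + 2)" by (rule fact_mono) simp
      have "a ^ (n + 2) / fact (n + 2) = a ^ 2 * (a ^ n / fact (n + 2))" by (simp add: power_add mult.commute power2_eq_square)
      also have "\<dots> \<le> a ^ 2 * (a ^ n / fact n)"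
        using a0 f by (intro mult_left_mono divide_left_mono) (auto simp: fact_ge_zero)
      finally show ?thesis .
    qed
    show "summable (\<lambda>n. a ^ (n + 2) / fact (n + 2))" by (rule s1)
    show "summable (\<lambda>n. a ^ 2 * (a ^ n / fact n))" by (rule summable_mult[OF sa])
  qed
  also have "\<dots> = a ^ 2 * (\<Sum>n. a ^ n / fact n)" by (rule suminf_mult[OF sa])
  also have "(\<Sum>n. a ^ n / fact n) = exp a"
    using exp_converges[of a] by (simp add: sums_iff divide_inverse mult.commute)
  finally show ?thesis by (simp add: a_def)
qed

lemma exp_norm_le4: "exp (norm h) \<le> exp (Re ((1 + \<i>) * h)) + exp (Re ((1 - \<i>) * h)) + exp (Re ((-1 + \<i>) * h)) + exp (Re ((-1 - \<i>) * h))"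
  for h :: complex
proof -
  have "norm h \<le> \<bar>Re h\<bar> + \<bar>Im h\<bar>" by (rule cmod_le)
  then have "exp (norm h) \<le> exp (\<bar>Re h\<bar> + \<bar>Im h\<bar>)" by simp
  also have "\<dots> \<le> exp (Re ((1 + \<i>) * h)) + exp (Re ((1 - \<i>) * h)) + exp (Re ((-1 + \<i>) * h)) + exp (Re ((-1 - \<i>) * h))"
    by (cases "Re h \<ge> 0"; cases "Im h \<ge> 0") (auto simp: add_pos_pos add_nonneg_nonneg)
  finally show ?thesis .
qed


lemma dpw_comb: "dpw L A (\<lambda>p q. \<alpha> * Y p q + \<beta> * Z p q) k = (\<lambda>p q. \<alpha> * dpw L A Y k p q + \<beta> * dpw L A Z k p q)"
proof (induction k)
  case 0 then show ?case by simp
next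
  case (Suc k) then show ?case
    unfolding dpw.simps(2)
    by (auto intro!: ext simp: sum_distrib_left sum.distrib[symmetric] algebra_simps intro!: sum.cong)
qed

lemma dex_comb: "dex L g K r J A (\<lambda>p q. \<alpha> * Y p q + \<beta> * Z p q) = \<alpha> * dex L g K r J A Y + \<beta> * dex L g K r J A Z"
  unfolding dex_def dpw_comb mtrace_def
  by (simp add: sum.distrib sum_distrib_left algebra_simps)

lemma Em_decomp:
  assumes "i < L" "j < L"
  shows "\<exists>\<alpha> \<beta> k1 k2. k1 \<in> {..<L} \<times> {..<L} \<and> k2 \<in> {..<L} \<times> {..<L} \<and>
     Em i j = (\<lambda>p q. \<alpha> * herm (ek k1) p q + \<beta> * herm (ek k2) p q)"
proof (cases i j rule: linorder_cases)
  case less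
  show ?thesis
    by (rule exI[of _ "1/2"], rule exI[of _ "- \<i>/2"], rule exI[of _ "(i,j)"], rule exI[of _ "(j,i)"])
       (use assms less in \<open>auto simp: Em_def herm_def ek_def fun_eq_iff complex_eq_iff\<close>)
next
  case equal
  show ?thesis
    by (rule exI[of _ 1], rule exI[of _ 0], rule exI[of _ "(i,i)"], rule exI[of _ "(i,i)"])
       (use assms equal in \<open>auto simp: Em_def herm_def ek_def fun_eq_iff complex_eq_iff\<close>)
next
  case greater
  show ?thesis
    by (rule exI[of _ "1/2"], rule exI[of _ "\<i>/2"], rule exI[of _ "(j,i)"], rule exI[of _ "(i,j)"])
       (use assms greater in \<open>auto simp: Em_def herm_def ek_def fun_eq_iff complex_eq_iff\<close>)
qed

context wm begin

lemma CSD: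
  assumes ij: "i < L" "j < L" and uv: "u < L" "v < L"
  shows "integral\<^sup>L (herm_lebesgue L)
    (\<lambda>x. ((if u = i \<and> v = j then 1 else 0) + herm x u v * dex L g K r J (herm x) (Em i j)) * integrand L g K r J x) = 0"
proof -
  obtain \<alpha> \<beta> k1 k2 where k: "k1 \<in> {..<L} \<times> {..<L}" "k2 \<in> {..<L} \<times> {..<L}"
    and Em: "Em i j = (\<lambda>p q. \<alpha> * herm (ek k1) p q + \<beta> * herm (ek k2) p q)"
    using Em_decomp[OF ij] by blast
  let ?F = "\<lambda>k x. (herm (ek k) u v + herm x u v * dex L g K r J (herm x) (herm (ek k))) * integrand L g K r J x"
  have int: "integrable (herm_lebesgue L) (?F k)" for k
    by (rule pf_int[OF pf_add[OF pf_const pf_mult[OF pf_herm[OF uv] pf_dex]]])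
  have "integral\<^sup>L (herm_lebesgue L) (\<lambda>x. \<alpha> * ?F k1 x + \<beta> * ?F k2 x)
      = \<alpha> * integral\<^sup>L (herm_lebesgue L) (?F k1) + \<beta> * integral\<^sup>L (herm_lebesgue L) (?F k2)"
    using int by (simp add: Bochner_Integration.integral_add)
  also have "\<dots> = 0" using SD_real[OF k(1) uv] SD_real[OF k(2) uv] by simp
  finally have 0: "integral\<^sup>L (herm_lebesgue L) (\<lambda>x. \<alpha> * ?F k1 x + \<beta> * ?F k2 x) = 0" .
  have e2: "\<alpha> * herm (ek k1) u v + \<beta> * herm (ek k2) u v = (if u = i \<and> v = j then 1 else 0)"
    using fun_cong[OF fun_cong[OF Em, of u], of v] by (simp add: Em_def)
  have "\<alpha> * ?F k1 x + \<beta> * ?F k2 x = ((\<alpha> * herm (ek k1) u v + \<beta> * herm (ek k2) u v)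
       + herm x u v * dex L g K r J (herm x) (\<lambda>p q. \<alpha> * herm (ek k1) p q + \<beta> * herm (ek k2) p q)) * integrand L g K r J x" for x
    by (simp add: dex_comb algebra_simps)
  then have "(\<lambda>x. \<alpha> * ?F k1 x + \<beta> * ?F k2 x)
     = (\<lambda>x. ((if u = i \<and> v = j then 1 else 0) + herm x u v * dex L g K r J (herm x) (Em i j)) * integrand L g K r J x)"
    unfolding e2 Em[symmetric] by simp
  with 0 show ?thesis by simp
qed

end


lemma source_upd:
  assumes p: "p \<in> {..<L} \<times> {..<L}"
  shows "source L (J(p:=z)) A = source L J A + (z - J p) * A (fst p) (snd p)"
proof -
  obtain p1 p2 where pp: "p = (p1, p2)" by (cases p)
  have e: "(J(p:=z)) (a,b) * A a b = J (a,b) * A a b + (if a = p1 \<and> b = p2 then 1 else 0) * ((z - J p) * A a b)" for a b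
    by (auto simp: pp algebra_simps)
  have "source L (J(p:=z)) A = source L J A + (\<Sum>a<L. \<Sum>b<L. (if a = p1 \<and> b = p2 then 1 else 0) * ((z - J p) * A a b))"
    unfolding source_def e by (simp add: sum.distrib)
  also have "\<dots> = source L J A + (z - J p) * A p1 p2"
    using p pp by (subst sum2_delta) auto
  finally show ?thesis by (simp add: pp)
qed

lemma integrand_upd:
  assumes p: "p \<in> {..<L} \<times> {..<L}"
  shows "integrand L g K r (J(p:=z)) x = integrand L g K r (J(p:=z0)) x * exp ((z - z0) * herm x (fst p) (snd p))"
  unfolding integrand_def source_upd[OF p, of J] source_upd[OF p, of J z0] mult_exp_exp
  by (rule arg_cong[where f=exp]) (simp add: algebra_simps)

context wm begin

lemma deriv_int:
  assumes p: "p \<in> {..<L} \<times> {..<L}" and P: "pf L P"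
  shows "((\<lambda>z. integral\<^sup>L (herm_lebesgue L) (\<lambda>x. P x * integrand L g K r (J(p:=z)) x)) has_field_derivative
     integral\<^sup>L (herm_lebesgue L) (\<lambda>x. P x * herm x (fst p) (snd p) * integrand L g K r (J(p:=z0)) x)) (at z0)"
proof -
  define h where "h x = herm x (fst p) (snd p)" for x
  define E0 where "E0 = integrand L g K r (J(p:=z0))"
  define F where "F z = integral\<^sup>L (herm_lebesgue L) (\<lambda>x. P x * integrand L g K r (J(p:=z)) x)" for z
  define D where "D = integral\<^sup>L (herm_lebesgue L) (\<lambda>x. P x * h x * E0 x)"
  have hpf: "pf L h" unfolding h_def using p by (intro pf_herm) auto
  have upd: "integrand L g K r (J(p:=z)) x = E0 x * exp ((z - z0) * h x)" for z x
    unfolding E0_def h_def by (rule integrand_upd[OF p])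
  have intP: "integrable (herm_lebesgue L) (\<lambda>x. P x * integrand L g K r J' x)" for J'
    by (rule pf_int[OF P])
  have intPh: "integrable (herm_lebesgue L) (\<lambda>x. P x * h x * E0 x)"
    unfolding E0_def by (rule pf_int[OF pf_mult[OF P hpf]])
  define Bd where "Bd x = norm (P x * E0 x) * norm (h x) ^ 2 * exp (norm (h x))" for x
  define M where "M = integral\<^sup>L (herm_lebesgue L) Bd"
  have intBd: "integrable (herm_lebesgue L) Bd"
  proof -
    let ?G = "\<lambda>c x. norm (P x * h x * h x * integrand L g K r (J(p:=z0 + c)) x)"
    have ig: "integrable (herm_lebesgue L) (?G c)" for c
      by (rule integrable_norm, rule pf_int[OF pf_mult[OF pf_mult[OF P hpf] hpf]])
    have i4: "integrable (herm_lebesgue L) (\<lambda>x. ?G (1 + \<i>) x + ?G (1 - \<i>) x + ?G (-1 + \<i>) x + ?G (-1 - \<i>) x)"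
      using ig by (intro Bochner_Integration.integrable_add) auto
    have Pm: "(\<lambda>x. P x * E0 x) \<in> borel_measurable (herm_lebesgue L)"
      using intP[of "J(p:=z0)"] unfolding E0_def by auto
    have hm: "h \<in> borel_measurable (herm_lebesgue L)" by (rule pf_meas[OF hpf])
    have Bm: "Bd \<in> borel_measurable (herm_lebesgue L)"
      unfolding Bd_def using Pm hm by measurable
    show ?thesis
    proof (rule Bochner_Integration.integrable_bound[OF i4 Bm], rule AE_I2)
      fix x
      have ne: "norm (P x * h x * h x * integrand L g K r (J(p:=z0 + c)) x) = norm (P x * E0 x) * norm (h x) ^ 2 * exp (Re (c * h x))" for c
        unfolding upd by (simp add: norm_mult norm_exp_eq_Re power2_eq_square)
      have "Bd x \<le> norm (P x * E0 x) * norm (h x) ^ 2 * (exp (Re ((1 + \<i>) * h x)) + exp (Re ((1 - \<i>) * h x)) + exp (Re ((-1 + \<i>) * h x)) + exp (Re ((-1 - \<i>) * h x)))"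
        unfolding Bd_def by (intro mult_left_mono exp_norm_le4) auto
      also have "\<dots> = ?G (1 + \<i>) x + ?G (1 - \<i>) x + ?G (-1 + \<i>) x + ?G (-1 - \<i>) x"
        unfolding ne by (simp add: algebra_simps)
      finally show "norm (Bd x) \<le> norm (?G (1 + \<i>) x + ?G (1 - \<i>) x + ?G (-1 + \<i>) x + ?G (-1 - \<i>) x)"
        by (simp add: Bd_def)
    qed
  qed
  have est: "norm (F (z0 + w) - F z0 - w * D) \<le> norm w ^ 2 * M" if w1: "norm w \<le> 1" for w
  proof -
    have "F (z0 + w) - F z0 - w * D = integral\<^sup>L (herm_lebesgue L)
       (\<lambda>x. P x * integrand L g K r (J(p:=z0 + w)) x - P x * E0 x - w * (P x * h x * E0 x))"
      unfolding F_def D_def E0_def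
      using intP[of "J(p:=z0+w)"] intP[of "J(p:=z0)"] intPh[unfolded E0_def]
      by (simp add: Bochner_Integration.integral_diff)
    also have "\<dots> = integral\<^sup>L (herm_lebesgue L) (\<lambda>x. P x * E0 x * (exp (w * h x) - 1 - w * h x))"
      unfolding upd by (simp add: algebra_simps)
    finally have eq: "F (z0 + w) - F z0 - w * D = integral\<^sup>L (herm_lebesgue L) (\<lambda>x. P x * E0 x * (exp (w * h x) - 1 - w * h x))" .
    have intR: "integrable (herm_lebesgue L) (\<lambda>x. P x * E0 x * (exp (w * h x) - 1 - w * h x))"
    proof -
      have "integrable (herm_lebesgue L) (\<lambda>x. P x * integrand L g K r (J(p:=z0 + w)) x - P x * E0 x - w * (P x * h x * E0 x))"
        using intP[of "J(p:=z0+w)"] intP[of "J(p:=z0)"] intPh unfolding E0_def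
        by (intro Bochner_Integration.integrable_diff integrable_mult_right) auto
      then show ?thesis unfolding upd by (simp add: algebra_simps)
    qed
    have pw: "norm (P x * E0 x * (exp (w * h x) - 1 - w * h x)) \<le> norm w ^ 2 * Bd x" for x
    proof -
      have "norm (exp (w * h x) - 1 - w * h x) \<le> norm (w * h x) ^ 2 * exp (norm (w * h x))"
        by (rule exp_rem_bound)
      also have "\<dots> \<le> norm w ^ 2 * norm (h x) ^ 2 * exp (norm (h x))"
      proof -
        have "norm (w * h x) \<le> norm (h x)" using w1 by (simp add: norm_mult mult_left_le_one_le)
        then have ee: "exp (norm (w * h x)) \<le> exp (norm (h x))" by simp
        have "norm (w * h x) ^ 2 * exp (norm (w * h x)) = norm w ^ 2 * norm (h x) ^ 2 * exp (norm (w * h x))"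
          by (simp add: norm_mult power_mult_distrib)
        also have "\<dots> \<le> norm w ^ 2 * norm (h x) ^ 2 * exp (norm (h x))"
          by (rule mult_left_mono[OF ee]) simp
        finally show ?thesis .
      qed
      finally have B: "norm (P x * E0 x) * norm (exp (w * h x) - 1 - w * h x) \<le> norm (P x * E0 x) * (norm w ^ 2 * norm (h x) ^ 2 * exp (norm (h x)))"
        by (intro mult_left_mono) auto
      have A: "norm (P x * E0 x * (exp (w * h x) - 1 - w * h x)) = norm (P x * E0 x) * norm (exp (w * h x) - 1 - w * h x)"
        by (rule norm_mult)
      have C: "norm (P x * E0 x) * (norm w ^ 2 * norm (h x) ^ 2 * exp (norm (h x))) = norm w ^ 2 * Bd x"
        unfolding Bd_def by (simp only: mult_ac)
      from A B C show ?thesis by linarith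
    qed
    have "norm (F (z0 + w) - F z0 - w * D) \<le> integral\<^sup>L (herm_lebesgue L) (\<lambda>x. norm (P x * E0 x * (exp (w * h x) - 1 - w * h x)))"
      unfolding eq by (rule integral_norm_bound)
    also have "\<dots> \<le> integral\<^sup>L (herm_lebesgue L) (\<lambda>x. norm w ^ 2 * Bd x)"
      using intR intBd by (intro integral_mono pw) auto
    also have "\<dots> = norm w ^ 2 * M" by (simp add: M_def)
    finally show ?thesis .
  qed
  have "((\<lambda>y. (F y - F z0) / (y - z0) - D) \<longlongrightarrow> 0) (at z0)"
  proof (rule Lim_null_comparison)
    show "\<forall>\<^sub>F y in at z0. norm ((F y - F z0) / (y - z0) - D) \<le> norm (y - z0) * M"
      unfolding eventually_at
    proof (intro exI[of _ 1] conjI ballI impI allI)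
      fix y assume y: "y \<noteq> z0 \<and> dist y z0 < 1"
      define w where "w = y - z0"
      have w0: "w \<noteq> 0" and w1: "norm w \<le> 1" using y by (auto simp: w_def dist_norm)
      have "(F y - F z0) / (y - z0) - D = (F (z0 + w) - F z0 - w * D) / w"
        using w0 by (simp add: w_def field_simps)
      then have "norm ((F y - F z0) / (y - z0) - D) = norm (F (z0 + w) - F z0 - w * D) / norm w"
        by (simp add: norm_divide)
      also have "\<dots> \<le> norm w ^ 2 * M / norm w"
        using est[OF w1] w0 by (intro divide_right_mono) auto
      also have "\<dots> = norm (y - z0) * M" using w0 by (simp add: w_def power2_eq_square)
      finally show "norm ((F y - F z0) / (y - z0) - D) \<le> norm (y - z0) * M" .
    qed simp
    show "((\<lambda>y. norm (y - z0) * M) \<longlongrightarrow> 0) (at z0)"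
      by (rule tendsto_mult_left_zero) (intro tendsto_norm_zero LIM_zero tendsto_ident_at)
  qed
  then have "((\<lambda>y. (F y - F z0) / (y - z0)) \<longlongrightarrow> D) (at z0)"
    by (simp add: LIM_zero_iff)
  then have "(F has_field_derivative D) (at z0)"
    by (simp add: has_field_derivative_iff)
  then show ?thesis unfolding F_def D_def h_def E0_def .
qed

end


context wm begin

lemma int_h: "i < L \<Longrightarrow> j < L \<Longrightarrow> integrable (herm_lebesgue L) (\<lambda>x. herm x i j * integrand L g K r J x)"
  by (rule pf_int[OF pf_herm])

lemma int_hh: "i < L \<Longrightarrow> j < L \<Longrightarrow> k < L \<Longrightarrow> l < L \<Longrightarrow>
   integrable (herm_lebesgue L) (\<lambda>x. herm x i j * herm x k l * integrand L g K r J x)"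
  by (rule pf_int[OF pf_mult[OF pf_herm pf_herm]])

lemma int_csd: "i < L \<Longrightarrow> j < L \<Longrightarrow> u < L \<Longrightarrow> v < L \<Longrightarrow>
   integrable (herm_lebesgue L) (\<lambda>x. (c + herm x u v * dex L g K r J (herm x) (Em i j)) * integrand L g K r J x)"
  by (rule pf_int[OF pf_add[OF pf_const pf_mult[OF pf_herm pf_dex]]])

lemma ward_int:
  assumes rs: "\<And>a b c d. a < L \<Longrightarrow> b < L \<Longrightarrow> c < L \<Longrightarrow> d < L \<Longrightarrow> r a b c d = r c d a b"
    and ac: "a < L" "c < L"
  shows "integral\<^sup>L (herm_lebesgue L) (\<lambda>x.
     ((\<Sum>b<L. \<Sum>d<L. \<Sum>e<L. r a b d e * (herm x c b * herm x d e) - r b c d e * (herm x b a * herm x d e))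
      - (\<Sum>b<L. J (a, b) * herm x c b - J (b, c) * herm x b a)) * integrand L g K r J x) = 0"
proof -
  define \<delta> :: complex where "\<delta> = (if a = c then 1 else 0)"
  let ?E = "integrand L g K r J"
  let ?A = "\<lambda>j x. (\<delta> + herm x c j * dex L g K r J (herm x) (Em a j)) * ?E x"
  let ?B = "\<lambda>i x. (\<delta> + herm x i a * dex L g K r J (herm x) (Em i c)) * ?E x"
  have A0: "integral\<^sup>L (herm_lebesgue L) (?A j) = 0" if "j < L" for j
  proof -
    have "(if c = a \<and> j = j then 1 else (0::complex)) = \<delta>" unfolding \<delta>_def by auto
    then show ?thesis using CSD[OF ac(1) that ac(2) that, of J] by simp
  qed
  have B0: "integral\<^sup>L (herm_lebesgue L) (?B i) = 0" if "i < L" for i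
  proof -
    have "(if i = i \<and> a = c then 1 else (0::complex)) = \<delta>" unfolding \<delta>_def by auto
    then show ?thesis using CSD[OF that ac(2) that ac(1), of J] by simp
  qed
  have iA: "integrable (herm_lebesgue L) (?A j)" if "j < L" for j using that ac by (intro int_csd) auto
  have iB: "integrable (herm_lebesgue L) (?B i)" if "i < L" for i using that ac by (intro int_csd) auto
  have "integral\<^sup>L (herm_lebesgue L) (\<lambda>x. (\<Sum>j<L. ?A j x) - (\<Sum>i<L. ?B i x))
      = (\<Sum>j<L. integral\<^sup>L (herm_lebesgue L) (?A j)) - (\<Sum>i<L. integral\<^sup>L (herm_lebesgue L) (?B i))"
  proof -
    have iSA: "integrable (herm_lebesgue L) (\<lambda>x. \<Sum>j<L. ?A j x)" using iA by (intro Bochner_Integration.integrable_sum) auto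
    have iSB: "integrable (herm_lebesgue L) (\<lambda>x. \<Sum>i<L. ?B i x)" using iB by (intro Bochner_Integration.integrable_sum) auto
    show ?thesis
      unfolding Bochner_Integration.integral_diff[OF iSA iSB]
      using iA iB by (subst (1 2) Bochner_Integration.integral_sum) auto
  qed
  also have "\<dots> = 0" using A0 B0 by simp
  finally have W0: "integral\<^sup>L (herm_lebesgue L) (\<lambda>x. (\<Sum>j<L. ?A j x) - (\<Sum>i<L. ?B i x)) = 0" .
  have pt: "((\<Sum>b<L. \<Sum>d<L. \<Sum>e<L. r a b d e * (herm x c b * herm x d e) - r b c d e * (herm x b a * herm x d e))
      - (\<Sum>b<L. J (a, b) * herm x c b - J (b, c) * herm x b a)) * ?E x
      = - ((\<Sum>j<L. ?A j x) - (\<Sum>i<L. ?B i x))" for x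
  proof -
    have "(\<Sum>j<L. ?A j x) - (\<Sum>i<L. ?B i x)
       = ((\<Sum>j<L. herm x c j * dex L g K r J (herm x) (Em a j)) - (\<Sum>i<L. herm x i a * dex L g K r J (herm x) (Em i c))) * ?E x"
      by (simp add: distrib_right sum.distrib left_diff_distrib sum_distrib_right)
    also have "\<dots> = (- (\<Sum>b<L. \<Sum>d<L. \<Sum>e<L. r a b d e * (herm x c b * herm x d e) - r b c d e * (herm x b a * herm x d e))
      + (\<Sum>b<L. J (a, b) * herm x c b - J (b, c) * herm x b a)) * ?E x"
      by (simp only: ward_alg[OF rs ac, where A="herm x"])
    finally show ?thesis by (simp add: algebra_simps)
  qed
  show ?thesis unfolding pt Bochner_Integration.integral_minus W0 by simp
qed

lemma pderiv_GI:
  assumes p: "p \<in> {..<L} \<times> {..<L}" and P: "pf L P"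
  shows "pderivJ (\<lambda>J. integral\<^sup>L (herm_lebesgue L) (\<lambda>x. P x * integrand L g K r J x)) p J
     = integral\<^sup>L (herm_lebesgue L) (\<lambda>x. P x * herm x (fst p) (snd p) * integrand L g K r J x)"
  unfolding pderivJ_def
  using DERIV_imp_deriv[OF deriv_int[OF p P, where J=J, of "J p"]] by simp

lemma Zpart_eq: "Zpart L g K r = (\<lambda>J. integral\<^sup>L (herm_lebesgue L) (\<lambda>x. 1 * integrand L g K r J x))"
  by (simp add: Zpart_def fun_eq_iff)

lemma d1: "c < L \<Longrightarrow> b < L \<Longrightarrow> pderivJ (Zpart L g K r) (c, b)
   = (\<lambda>J. integral\<^sup>L (herm_lebesgue L) (\<lambda>x. 1 * herm x c b * integrand L g K r J x))"
  unfolding Zpart_eq by (rule ext, subst pderiv_GI) (auto intro: pf_const)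

lemma d2: "c < L \<Longrightarrow> b < L \<Longrightarrow> d < L \<Longrightarrow> e < L \<Longrightarrow> pderivJ (pderivJ (Zpart L g K r) (c, b)) (d, e) J
   = integral\<^sup>L (herm_lebesgue L) (\<lambda>x. 1 * herm x c b * herm x d e * integrand L g K r J x)"
  unfolding d1 by (subst pderiv_GI) (auto intro: pf_mult pf_const pf_herm)

lemma integral_sum3:
  assumes "\<And>b d e. b < L \<Longrightarrow> d < L \<Longrightarrow> e < L \<Longrightarrow> integrable (herm_lebesgue L) (f b d e)"
  shows "integral\<^sup>L (herm_lebesgue L) (\<lambda>x. \<Sum>b<L. \<Sum>d<L. \<Sum>e<L. f b d e x)
     = (\<Sum>b<L. \<Sum>d<L. \<Sum>e<L. integral\<^sup>L (herm_lebesgue L) (f b d e))"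
proof -
  have i2: "integrable (herm_lebesgue L) (\<lambda>x. \<Sum>e<L. f b d e x)" if "b < L" "d < L" for b d
    using assms that by (intro Bochner_Integration.integrable_sum) auto
  have i1: "integrable (herm_lebesgue L) (\<lambda>x. \<Sum>d<L. \<Sum>e<L. f b d e x)" if "b < L" for b
    using that by (intro i2 Bochner_Integration.integrable_sum) auto
  have "integral\<^sup>L (herm_lebesgue L) (\<lambda>x. \<Sum>b<L. \<Sum>d<L. \<Sum>e<L. f b d e x)
     = (\<Sum>b<L. integral\<^sup>L (herm_lebesgue L) (\<lambda>x. \<Sum>d<L. \<Sum>e<L. f b d e x))"
    using i1 by (intro Bochner_Integration.integral_sum) auto
  also have "\<dots> = (\<Sum>b<L. \<Sum>d<L. integral\<^sup>L (herm_lebesgue L) (\<lambda>x. \<Sum>e<L. f b d e x))"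
    using i2 by (intro sum.cong refl Bochner_Integration.integral_sum) auto
  also have "\<dots> = (\<Sum>b<L. \<Sum>d<L. \<Sum>e<L. integral\<^sup>L (herm_lebesgue L) (f b d e))"
    using assms by (intro sum.cong refl Bochner_Integration.integral_sum) auto
  finally show ?thesis .
qed

lemma main:
  assumes rs: "\<And>a b c d. a < L \<Longrightarrow> b < L \<Longrightarrow> c < L \<Longrightarrow> d < L \<Longrightarrow> r a b c d = r c d a b"
    and ac: "a < L" "c < L"
  shows "(\<Sum>b<L. \<Sum>d<L. \<Sum>e<L.
            r a b d e * pderivJ (pderivJ (Zpart L g K r) (c, b)) (d, e) J
          - r b c d e * pderivJ (pderivJ (Zpart L g K r) (b, a)) (d, e) J)
       - (\<Sum>b<L. J (a, b) * pderivJ (Zpart L g K r) (c, b) J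
          - J (b, c) * pderivJ (Zpart L g K r) (b, a) J) = 0"
proof -
  define E where "E = integrand L g K r J"
  define T1 where "T1 b d e x = r a b d e * (herm x c b * herm x d e * E x) - r b c d e * (herm x b a * herm x d e * E x)" for b d e x
  define T2 where "T2 b x = J (a, b) * (herm x c b * E x) - J (b, c) * (herm x b a * E x)" for b x
  have ihh: "integrable (herm_lebesgue L) (\<lambda>x. herm x i j * herm x k l * E x)" if "i < L" "j < L" "k < L" "l < L" for i j k l
    unfolding E_def using that by (intro pf_int pf_mult pf_herm)
  have ih: "integrable (herm_lebesgue L) (\<lambda>x. herm x i j * E x)" if "i < L" "j < L" for i j
    unfolding E_def using that by (intro pf_int pf_herm)
  have iT1: "integrable (herm_lebesgue L) (T1 b d e)" if "b < L" "d < L" "e < L" for b d e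
    unfolding T1_def[abs_def] using that ac by (intro Bochner_Integration.integrable_diff integrable_mult_right ihh) auto
  have iT2: "integrable (herm_lebesgue L) (T2 b)" if "b < L" for b
    unfolding T2_def[abs_def] using that ac by (intro Bochner_Integration.integrable_diff integrable_mult_right ih) auto
  have iS1: "integrable (herm_lebesgue L) (\<lambda>x. \<Sum>b<L. \<Sum>d<L. \<Sum>e<L. T1 b d e x)"
    using iT1 by (intro Bochner_Integration.integrable_sum) auto
  have iS2: "integrable (herm_lebesgue L) (\<lambda>x. \<Sum>b<L. T2 b x)"
    using iT2 by (intro Bochner_Integration.integrable_sum) auto
  have IT1: "integral\<^sup>L (herm_lebesgue L) (T1 b d e) = r a b d e * pderivJ (pderivJ (Zpart L g K r) (c, b)) (d, e) J
          - r b c d e * pderivJ (pderivJ (Zpart L g K r) (b, a)) (d, e) J" if "b < L" "d < L" "e < L" for b d e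
    unfolding T1_def[abs_def] using that ac ihh by (simp add: d2 E_def Bochner_Integration.integral_diff)
  have IT2: "integral\<^sup>L (herm_lebesgue L) (T2 b) = J (a, b) * pderivJ (Zpart L g K r) (c, b) J
          - J (b, c) * pderivJ (Zpart L g K r) (b, a) J" if "b < L" for b
    unfolding T2_def[abs_def] using that ac ih by (simp add: d1 E_def Bochner_Integration.integral_diff)
  have "(\<Sum>b<L. \<Sum>d<L. \<Sum>e<L.
            r a b d e * pderivJ (pderivJ (Zpart L g K r) (c, b)) (d, e) J
          - r b c d e * pderivJ (pderivJ (Zpart L g K r) (b, a)) (d, e) J)
       - (\<Sum>b<L. J (a, b) * pderivJ (Zpart L g K r) (c, b) J
          - J (b, c) * pderivJ (Zpart L g K r) (b, a) J)
     = (\<Sum>b<L. \<Sum>d<L. \<Sum>e<L. integral\<^sup>L (herm_lebesgue L) (T1 b d e)) - (\<Sum>b<L. integral\<^sup>L (herm_lebesgue L) (T2 b))"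
    using IT1 IT2 by simp
  also have "\<dots> = integral\<^sup>L (herm_lebesgue L) (\<lambda>x. (\<Sum>b<L. \<Sum>d<L. \<Sum>e<L. T1 b d e x)) - integral\<^sup>L (herm_lebesgue L) (\<lambda>x. \<Sum>b<L. T2 b x)"
    using iT2 by (simp add: integral_sum3[OF iT1] Bochner_Integration.integral_sum)
  also have "\<dots> = integral\<^sup>L (herm_lebesgue L) (\<lambda>x. (\<Sum>b<L. \<Sum>d<L. \<Sum>e<L. T1 b d e x) - (\<Sum>b<L. T2 b x))"
    by (rule Bochner_Integration.integral_diff[OF iS1 iS2, symmetric])
  also have "(\<lambda>x. (\<Sum>b<L. \<Sum>d<L. \<Sum>e<L. T1 b d e x) - (\<Sum>b<L. T2 b x))
     = (\<lambda>x. ((\<Sum>b<L. \<Sum>d<L. \<Sum>e<L. r a b d e * (herm x c b * herm x d e) - r b c d e * (herm x b a * herm x d e))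
      - (\<Sum>b<L. J (a, b) * herm x c b - J (b, c) * herm x b a)) * integrand L g K r J x)"
    unfolding T1_def T2_def E_def by (simp add: sum_distrib_right left_diff_distrib mult.assoc)
  also have "integral\<^sup>L (herm_lebesgue L) \<dots> = 0" by (rule ward_int[OF rs ac])
  finally show ?thesis .
qed

end

theorem theorem1:
  fixes \<Lambda> K :: nat and g :: "nat \<Rightarrow> real"
    and r :: "nat \<Rightarrow> nat \<Rightarrow> nat \<Rightarrow> nat \<Rightarrow> complex"
    and J :: "nat \<times> nat \<Rightarrow> complex" and a c :: nat
  assumes "\<Lambda> \<ge> 1"
    and r_sym: "\<And>a b c d. a < \<Lambda> \<Longrightarrow> b < \<Lambda> \<Longrightarrow> c < \<Lambda> \<Longrightarrow> d < \<Lambda> \<Longrightarrow> r a b c d = r c d a b"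
    and conv: "\<And>J' ms. set ms \<subseteq> {..<\<Lambda>} \<times> {..<\<Lambda>} \<Longrightarrow>
        integrable (herm_lebesgue \<Lambda>)
          (\<lambda>x. (\<Prod>p\<leftarrow>ms. herm x (fst p) (snd p)) * integrand \<Lambda> g K r J' x)"
    and "a < \<Lambda>" and "c < \<Lambda>"
  shows "(\<Sum>b<\<Lambda>. \<Sum>d<\<Lambda>. \<Sum>e<\<Lambda>.
            r a b d e * pderivJ (pderivJ (Zpart \<Lambda> g K r) (c, b)) (d, e) J
          - r b c d e * pderivJ (pderivJ (Zpart \<Lambda> g K r) (b, a)) (d, e) J)
       - (\<Sum>b<\<Lambda>. J (a, b) * pderivJ (Zpart \<Lambda> g K r) (c, b) J
          - J (b, c) * pderivJ (Zpart \<Lambda> g K r) (b, a) J) = 0"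
proof -
  interpret wm \<Lambda> g K r using conv by unfold_locales
  show ?thesis by (rule main[OF r_sym assms(4,5)])
qed


end
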